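(* Let $G$ be a fullerene graph, $C$ a longest cycle of $G$, and apply the discharging procedure described in the context. If $f=v_1v_2v_3v_4v_5v_6$ is a white face of $G$ such that the edges $v_3v_4$ and $v_5v_6$ are contained in $C$ and the edge $v_4v_5$ is not contained in $C$, then the final amount of charge of $f$ is $1$ unit.
   Context: A fullerene graph is a cubic, planar, $3$-connected graph embedded in the plane in which every face has size five or six. Fix a longest cycle $C$ of $G$; vertices on $C$ are black, the others white. Every face of $G$ is incident with at most two white vertices. A face incident with exactly two white vertices is called white; a face incident with no white vertex is called black. For a face $f$ with vertices $v_1,\dots,v_k$ in cyclic order, $f_{i,i+1}$ denotes the face other than $f$ containing the edge $v_iv_{i+1}$ (indices modulo $k$). Discharging: each white vertex receives $3$ units of charge and sends $1$ unit to each of its three incident faces (so each face initially has charge equal to its number of incident white vertices). Then charge is redistributed by two rules, where $f_0=v_1\dots v_6$ is a black face of size six and indices are modulo $6$. Rule A: $f_0$ receives $1/2$ unit from $f_{i,i+1}$ if the path $v_{i-1}v_iv_{i+1}v_{i+2}$ is contained in $C$ and the face $f_{i,i+1}$ is white. Rule B: $f_0$ receives $1$ unit from $f_{i,i+1}$ if the edge $v_iv_{i+1}$ is contained in $C$, neither $v_{i-1}v_i$ nor $v_{i+1}v_{i+2}$ is contained in $C$, and the face $f_{i,i+1}$ is white. The final charge of a face is its initial charge plus all charge received minus all charge sent under Rules A and B. *)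

theory Defs
  imports Complex_Main
begin

definition simple_graph :: "'a set \<Rightarrow> 'a set set \<Rightarrow> bool" where
  "simple_graph V E \<longleftrightarrow> finite V \<and>
     (\<forall>e\<in>E. \<exists>u v. u \<in> V \<and> v \<in> V \<and> u \<noteq> v \<and> e = {u, v})"

definition neighbors :: "'a set set \<Rightarrow> 'a \<Rightarrow> 'a set" where
  "neighbors E v = {u. {u, v} \<in> E}"

definition cubic :: "'a set \<Rightarrow> 'a set set \<Rightarrow> bool" where
  "cubic V E \<longleftrightarrow> (\<forall>v\<in>V. card (neighbors E v) = 3)"

definition connected_on :: "'a set set \<Rightarrow> 'a set \<Rightarrow> bool" where
  "connected_on E S \<longleftrightarrow> S \<noteq> {} \<and>
     (\<forall>u\<in>S. \<forall>v\<in>S. (\<lambda>x y. x \<in> S \<and> y \<in> S \<and> {x, y} \<in> E)\<^sup>*\<^sup>* u v)"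

definition three_connected :: "'a set \<Rightarrow> 'a set set \<Rightarrow> bool" where
  "three_connected V E \<longleftrightarrow> card V \<ge> 4 \<and>
     (\<forall>S \<subseteq> V. card S \<le> 2 \<longrightarrow> connected_on E (V - S))"

definition cyc_edges :: "'a list \<Rightarrow> 'a set set" where
  "cyc_edges xs = {{xs ! i, xs ! ((i + 1) mod length xs)} | i. i < length xs}"

definition is_cycle :: "'a set set \<Rightarrow> 'a list \<Rightarrow> bool" where
  "is_cycle E xs \<longleftrightarrow> distinct xs \<and> length xs \<ge> 3 \<and> cyc_edges xs \<subseteq> E"

definition longest_cycle :: "'a set set \<Rightarrow> 'a list \<Rightarrow> bool" where
  "longest_cycle E xs \<longleftrightarrow> is_cycle E xs \<and> (\<forall>ys. is_cycle E ys \<longrightarrow> length ys \<le> length xs)"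

text \<open>Faces are indexed by elements of Fs; bd f is the boundary of face f, listed in cyclic order.
  The embedding in the plane (sphere) is given combinatorially: every face boundary is a cycle
  of G, every edge lies on exactly two faces, and Euler's formula V - E + F = 2 holds
  (together with connectivity this characterizes a cellular embedding in the sphere).\<close>
definition fullerene :: "'a set \<Rightarrow> 'a set set \<Rightarrow> 'f set \<Rightarrow> ('f \<Rightarrow> 'a list) \<Rightarrow> bool" where
  "fullerene V E Fs bd \<longleftrightarrow>
     simple_graph V E \<and> cubic V E \<and> three_connected V E \<and> finite Fs \<and>
     (\<forall>f\<in>Fs. is_cycle E (bd f) \<and> length (bd f) \<in> {5, 6}) \<and>
     (\<forall>e\<in>E. card {f \<in> Fs. e \<in> cyc_edges (bd f)} = 2) \<and>
     int (card V) - int (card E) + int (card Fs) = 2"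

definition cyclic_order :: "'a list \<Rightarrow> 'a list \<Rightarrow> bool" where
  "cyclic_order xs ys \<longleftrightarrow> (\<exists>n. ys = rotate n xs \<or> ys = rotate n (rev xs))"

definition white_verts :: "'a list \<Rightarrow> 'a list \<Rightarrow> 'a set" where
  "white_verts C vs = {v \<in> set vs. v \<notin> set C}"

definition white_face :: "'a list \<Rightarrow> ('f \<Rightarrow> 'a list) \<Rightarrow> 'f \<Rightarrow> bool" where
  "white_face C bd f \<longleftrightarrow> card (white_verts C (bd f)) = 2"

definition black_face :: "'a list \<Rightarrow> ('f \<Rightarrow> 'a list) \<Rightarrow> 'f \<Rightarrow> bool" where
  "black_face C bd f \<longleftrightarrow> white_verts C (bd f) = {}"

definition face_edge :: "('f \<Rightarrow> 'a list) \<Rightarrow> 'f \<Rightarrow> nat \<Rightarrow> 'a set" where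
  "face_edge bd f j = {bd f ! (j mod length (bd f)), bd f ! ((j + 1) mod length (bd f))}"

definition other_face :: "'f set \<Rightarrow> ('f \<Rightarrow> 'a list) \<Rightarrow> 'f \<Rightarrow> 'a set \<Rightarrow> 'f" where
  "other_face Fs bd f e = (THE g. g \<in> Fs \<and> g \<noteq> f \<and> e \<in> cyc_edges (bd g))"

definition initial_charge :: "'a list \<Rightarrow> ('f \<Rightarrow> 'a list) \<Rightarrow> 'f \<Rightarrow> real" where
  "initial_charge C bd f = real (card (white_verts C (bd f)))"

text \<open>Amount received by the face g (playing the role of f0 = v_1...v_6, here 0-indexed)
  across its i-th edge v_i v_(i+1) from the face on the other side, by Rule A or Rule B.
  The predecessor index i-1 is (i+5) mod 6.\<close>
definition transfer :: "'f set \<Rightarrow> ('f \<Rightarrow> 'a list) \<Rightarrow> 'a list \<Rightarrow> 'f \<Rightarrow> nat \<Rightarrow> real" where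
  "transfer Fs bd C g i =
     (if length (bd g) = 6 \<and> black_face C bd g
         \<and> white_face C bd (other_face Fs bd g (face_edge bd g i)) then
        (if face_edge bd g (i + 5) \<in> cyc_edges C \<and> face_edge bd g i \<in> cyc_edges C
            \<and> face_edge bd g (i + 1) \<in> cyc_edges C then 1/2
         else if face_edge bd g i \<in> cyc_edges C \<and> face_edge bd g (i + 5) \<notin> cyc_edges C
            \<and> face_edge bd g (i + 1) \<notin> cyc_edges C then 1
         else 0)
      else 0)"

definition final_charge :: "'f set \<Rightarrow> ('f \<Rightarrow> 'a list) \<Rightarrow> 'a list \<Rightarrow> 'f \<Rightarrow> real" where
  "final_charge Fs bd C f =
     initial_charge C bd f
     + (\<Sum>i<length (bd f). transfer Fs bd C f i)
     - (\<Sum>g\<in>Fs. \<Sum>i<length (bd g).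
          if other_face Fs bd g (face_edge bd g i) = f then transfer Fs bd C g i else 0)"

end

theory Submission
  imports Defs
begin

fun pedges :: "'a list \<Rightarrow> 'a set set" where
  "pedges (a # b # xs) = insert {a, b} (pedges (b # xs))"
| "pedges _ = {}"

lemma pedges_nth: "e \<in> pedges xs \<longleftrightarrow> (\<exists>i. Suc i < length xs \<and> e = {xs ! i, xs ! Suc i})"
proof (induction xs rule: pedges.induct)
  case (1 a b xs)
  show ?case
  proof
    assume "e \<in> pedges (a # b # xs)"
    then consider "e = {a,b}" | "e \<in> pedges (b # xs)" by auto
    then show "\<exists>i. Suc i < length (a # b # xs) \<and> e = {(a # b # xs) ! i, (a # b # xs) ! Suc i}"
    proof cases
      case 1 then show ?thesis by (intro exI[of _ 0]) auto
    next
      case 2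
      then obtain i where "Suc i < length (b # xs)" "e = {(b # xs) ! i, (b # xs) ! Suc i}"
        using "1.IH" by blast
      then show ?thesis by (intro exI[of _ "Suc i"]) auto
    qed
  next
    assume "\<exists>i. Suc i < length (a # b # xs) \<and> e = {(a # b # xs) ! i, (a # b # xs) ! Suc i}"
    then obtain i where i: "Suc i < length (a # b # xs)" "e = {(a # b # xs) ! i, (a # b # xs) ! Suc i}" by blast
    show "e \<in> pedges (a # b # xs)"
    proof (cases i)
      case 0 then show ?thesis using i by simp
    next
      case (Suc j)
      then have "Suc j < length (b # xs)" "e = {(b # xs) ! j, (b # xs) ! Suc j}" using i by auto
      then show ?thesis using "1.IH" by auto
    qed
  qed
next
  case "2_1" then show ?case by simp
next
  case ("2_2" v) then show ?case by simp
qed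


lemma pedges_append: "pedges (xs @ ys) = pedges xs \<union> pedges ys \<union>
   (if xs \<noteq> [] \<and> ys \<noteq> [] then {{last xs, hd ys}} else {})"
proof (induction xs rule: pedges.induct)
  case (1 a b xs) then show ?case by auto
next
  case ("2_1") then show ?case by simp
next
  case ("2_2" v) then show ?case by (cases ys) auto
qed

lemma pedges_Cons2: "pedges (a # xs) = pedges xs \<union> (if xs \<noteq> [] then {{a, hd xs}} else {})"
  by (cases xs) auto

lemma pedges_rev: "pedges (rev xs) = pedges xs"
proof (induction xs)
  case (Cons a xs) then show ?case
    by (auto simp: pedges_append pedges_Cons2 last_rev insert_commute)
qed simp

lemma pedges_subset: "e \<in> pedges xs \<Longrightarrow> e \<subseteq> set xs"
  by (induction xs rule: pedges.induct) auto

lemma cyc_edges_pedges: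
  assumes "xs \<noteq> []"
  shows "cyc_edges xs = insert {last xs, hd xs} (pedges xs)"
proof (rule set_eqI, rule iffI)
  fix e assume "e \<in> cyc_edges xs"
  then obtain i where i: "i < length xs" "e = {xs ! i, xs ! ((i + 1) mod length xs)}"
    unfolding cyc_edges_def by auto
  show "e \<in> insert {last xs, hd xs} (pedges xs)"
  proof (cases "Suc i < length xs")
    case True then show ?thesis using i by (auto simp: pedges_nth)
  next
    case False
    then have "i = length xs - 1" "Suc i = length xs" using i by auto
    then show ?thesis using i assms by (auto simp: last_conv_nth hd_conv_nth)
  qed
next
  fix e assume "e \<in> insert {last xs, hd xs} (pedges xs)"
  then show "e \<in> cyc_edges xs"
  proof
    assume "e = {last xs, hd xs}"
    then show ?thesis unfolding cyc_edges_def using assms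
      apply (intro CollectI exI[of _ "length xs - 1"])
      by (auto simp: last_conv_nth hd_conv_nth)
  next
    assume "e \<in> pedges xs"
    then obtain i where "Suc i < length xs" "e = {xs ! i, xs ! Suc i}" by (auto simp: pedges_nth)
    then show ?thesis unfolding cyc_edges_def
      by (intro CollectI exI[of _ i]) auto
  qed
qed

lemma cyc_edges_rotate1: "cyc_edges (rotate1 xs) = cyc_edges xs"
proof (cases xs)
  case Nil then show ?thesis by simp
next
  case (Cons a R)
  show ?thesis
  proof (cases R)
    case Nil then show ?thesis using Cons by simp
  next
    case (Cons b R')
    have "pedges (b # R' @ [a]) = pedges (b # R') \<union> {{last (b # R'), a}}"
      using pedges_append[of "b # R'" "[a]"] by simp
    then show ?thesis using \<open>xs = a # R\<close> Cons
      by (auto simp: cyc_edges_pedges insert_commute)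
  qed
qed

lemma cyc_edges_rotate: "cyc_edges (rotate n xs) = cyc_edges xs"
  by (induction n) (auto simp: cyc_edges_rotate1)

lemma cyc_edges_rev: "cyc_edges (rev xs) = cyc_edges xs"
proof (cases "xs = []")
  case False then show ?thesis
    by (simp add: cyc_edges_pedges pedges_rev hd_rev last_rev insert_commute)
qed simp

lemma cyc_edges_subset: "e \<in> cyc_edges L \<Longrightarrow> e \<subseteq> set L"
  unfolding cyc_edges_def by (fastforce intro!: nth_mem mod_less_divisor)

lemma cyc_edges_doubleton: "e \<in> cyc_edges L \<Longrightarrow> t \<in> e \<Longrightarrow> \<exists>c. e = {t, c}"
  unfolding cyc_edges_def by auto

lemma cyc_edges_Cons:
  assumes "R \<noteq> []"
  shows "cyc_edges (a # R) = insert {last R, a} (insert {a, hd R} (pedges R))"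
  using assms by (simp add: cyc_edges_pedges pedges_Cons2)

lemma cyc_edges_split: "cyc_edges (u @ a # w) = cyc_edges (a # w @ u)"
proof -
  have "rotate (length u) (u @ a # w) = a # w @ u" by (simp add: rotate_append)
  then show ?thesis by (metis cyc_edges_rotate)
qed

lemma nbr_in_cycle:
  assumes "distinct (u @ a # w)" "w @ u \<noteq> []" "{a, b} \<in> cyc_edges (u @ a # w)"
  shows "b = hd (w @ u) \<or> b = last (w @ u)"
proof -
  let ?R = "w @ u"
  have 1: "{a, b} \<in> insert {last ?R, a} (insert {a, hd ?R} (pedges ?R))"
    using assms(3) cyc_edges_split cyc_edges_Cons[OF assms(2)] by metis
  have na: "a \<notin> set ?R" using assms(1) by auto
  have "{a, b} \<notin> pedges ?R" using pedges_subset na by blast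
  with 1 have "{a, b} = {last ?R, a} \<or> {a, b} = {a, hd ?R}" by blast
  moreover have "last ?R \<in> set ?R" "hd ?R \<in> set ?R" using assms(2) last_in_set hd_in_set by blast+
  ultimately show ?thesis using na by (metis doubleton_eq_iff)
qed

lemma nbr_in_cycle2:
  assumes "w @ u \<noteq> []"
  shows "{a, hd (w @ u)} \<in> cyc_edges (u @ a # w)" "{a, last (w @ u)} \<in> cyc_edges (u @ a # w)"
proof -
  have e: "cyc_edges (u @ a # w) = insert {last (w@u), a} (insert {a, hd (w@u)} (pedges (w@u)))"
    using cyc_edges_split cyc_edges_Cons[OF assms] by metis
  show "{a, hd (w @ u)} \<in> cyc_edges (u @ a # w)" unfolding e by blast
  show "{a, last (w @ u)} \<in> cyc_edges (u @ a # w)" unfolding e by (simp add: insert_commute)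
qed

lemma hd_neq_last: "distinct xs \<Longrightarrow> length xs \<ge> 2 \<Longrightarrow> hd xs \<noteq> last xs"
proof (cases xs)
  case (Cons a r)
  assume "distinct xs" "length xs \<ge> 2"
  then have "r \<noteq> []" using Cons by auto
  then have "last xs \<in> set r" using Cons by simp
  then show ?thesis using Cons \<open>distinct xs\<close> by auto
qed simp

lemma cycle_nbrs:
  assumes "distinct L" "length L \<ge> 3" "t \<in> set L"
  shows "\<exists>p q. p \<noteq> q \<and> {t, p} \<in> cyc_edges L \<and> {t, q} \<in> cyc_edges L \<and>
     (\<forall>c. {t, c} \<in> cyc_edges L \<longrightarrow> c = p \<or> c = q)"
proof -
  obtain u w where L: "L = u @ t # w" using assms(3) by (meson split_list)
  have ne: "w @ u \<noteq> []" using assms(2) L by auto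
  have "length (w @ u) \<ge> 2" using assms(2) L by auto
  moreover have "distinct (w @ u)" using assms(1) L by auto
  ultimately have "hd (w @ u) \<noteq> last (w @ u)" using hd_neq_last by blast
  moreover have "\<forall>c. {t, c} \<in> cyc_edges L \<longrightarrow> c = hd (w @ u) \<or> c = last (w @ u)"
    using nbr_in_cycle[of u t w] ne assms(1) L by blast
  ultimately show ?thesis using nbr_in_cycle2[OF ne, of t] L by blast
qed

lemma norm_cycle:
  assumes "distinct L" "length L \<ge> 3" "{a, b} \<in> cyc_edges L"
  shows "\<exists>R. cyc_edges (a # b # R) = cyc_edges L \<and> set (a # b # R) = set L
     \<and> distinct (a # b # R) \<and> length (a # b # R) = length L"
proof -
  have "a \<in> set L" using assms(3) cyc_edges_subset by blast
  then obtain u w where L: "L = u @ a # w" by (meson split_list)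
  have ne: "w @ u \<noteq> []" using assms(2) L by auto
  have M: "cyc_edges (a # w @ u) = cyc_edges L" "set (a # w @ u) = set L"
    "distinct (a # w @ u)" "length (a # w @ u) = length L"
    using L assms(1) cyc_edges_split[of u a w] by auto
  have "b = hd (w @ u) \<or> b = last (w @ u)"
    using nbr_in_cycle[of u a w b] assms L ne by blast
  then show ?thesis
  proof
    assume "b = hd (w @ u)"
    then obtain R where "w @ u = b # R" using ne by (metis list.collapse)
    then show ?thesis using M by metis
  next
    assume "b = last (w @ u)"
    then obtain R where R: "w @ u = R @ [b]" using ne by (metis append_butlast_last_id)
    have "rotate (length (b # rev R)) (rev (a # w @ u)) = a # b # rev R"
      using R rotate_append[of "b # rev R" "[a]"] by simp
    then have "cyc_edges (a # b # rev R) = cyc_edges L"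
      by (metis M(1) cyc_edges_rev cyc_edges_rotate)
    moreover have "set (a # b # rev R) = set L" "distinct (a # b # rev R)"
      "length (a # b # rev R) = length L" using M R by auto
    ultimately show ?thesis by blast
  qed
qed

lemma full_cycles: "fullerene V E Fs bd \<Longrightarrow> \<forall>f\<in>Fs. is_cycle E (bd f) \<and> length (bd f) \<in> {5, 6}"
  unfolding fullerene_def by (elim conjE, assumption)

lemma full_cycle: "fullerene V E Fs bd \<Longrightarrow> h \<in> Fs \<Longrightarrow> is_cycle E (bd h) \<and> length (bd h) \<in> {5,6}"
  using full_cycles by blast

lemma full_cards: "fullerene V E Fs bd \<Longrightarrow> \<forall>e\<in>E. card {f \<in> Fs. e \<in> cyc_edges (bd f)} = 2"
  unfolding fullerene_def by (elim conjE, assumption)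

lemma full_card: "fullerene V E Fs bd \<Longrightarrow> e \<in> E \<Longrightarrow> card {f \<in> Fs. e \<in> cyc_edges (bd f)} = 2"
  using full_cards by blast

lemma full_finite: "fullerene V E Fs bd \<Longrightarrow> finite Fs"
  unfolding fullerene_def by (elim conjE, assumption)

lemma face_nbrs:
  assumes "fullerene V E Fs bd" "h \<in> Fs" "v \<in> set (bd h)"
  shows "\<exists>p q. p \<noteq> q \<and> {v, p} \<in> cyc_edges (bd h) \<and> {v, q} \<in> cyc_edges (bd h) \<and>
     (\<forall>c. {v, c} \<in> cyc_edges (bd h) \<longrightarrow> c = p \<or> c = q)"
proof -
  have "is_cycle E (bd h)" using full_cycle[OF assms(1,2)] by blast
  then have "distinct (bd h)" "length (bd h) \<ge> 3" unfolding is_cycle_def by auto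
  then show ?thesis using assms(3) by (rule cycle_nbrs)
qed

lemma three_faces:
  assumes full: "fullerene V E Fs bd" and "e \<in> E"
    and "f \<in> Fs" "g \<in> Fs" "k \<in> Fs" "f \<noteq> g" "f \<noteq> k" "g \<noteq> k"
    and "e \<in> cyc_edges (bd f)" "e \<in> cyc_edges (bd g)" "e \<in> cyc_edges (bd k)"
  shows False
proof -
  have "{f, g, k} \<subseteq> {h \<in> Fs. e \<in> cyc_edges (bd h)}" using assms(3-5,9-11) by blast
  moreover have "finite {h \<in> Fs. e \<in> cyc_edges (bd h)}" using full_finite[OF full] by simp
  ultimately have "card {f, g, k} \<le> card {h \<in> Fs. e \<in> cyc_edges (bd h)}" by (rule card_mono[rotated])
  then have "card {f, g, k} \<le> 2" using full_card[OF full assms(2)] by simp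
  moreover have "card {f, g, k} = 3" using assms(6,7,8) by simp
  ultimately show False by simp
qed

lemma edge_of_face:
  assumes "fullerene V E Fs bd" "h \<in> Fs" "e \<in> cyc_edges (bd h)" shows "e \<in> E"
proof -
  have "is_cycle E (bd h)" using full_cycle[OF assms(1,2)] by (rule conjunct1)
  then have "cyc_edges (bd h) \<subseteq> E" unfolding is_cycle_def by (elim conjE)
  then show ?thesis using assms(3) by (rule subsetD)
qed

lemma rot_vertex:
  assumes full: "fullerene V E Fs bd" and fg: "f \<in> Fs" "g \<in> Fs" "f \<noteq> g"
    and fa: "{v, a} \<in> cyc_edges (bd f)" and fb: "{v, b} \<in> cyc_edges (bd f)"
    and gb: "{v, b} \<in> cyc_edges (bd g)"
    and nb: "neighbors E v = {a, b, c}" and d: "a \<noteq> b" "a \<noteq> c" "b \<noteq> c"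
  shows "{v, c} \<in> cyc_edges (bd g)"
proof (rule ccontr)
  assume nc: "{v, c} \<notin> cyc_edges (bd g)"
  have vg: "v \<in> set (bd g)" using gb cyc_edges_subset by blast
  obtain p q where pq: "p \<noteq> q" "{v, p} \<in> cyc_edges (bd g)" "{v, q} \<in> cyc_edges (bd g)"
    "\<forall>c. {v, c} \<in> cyc_edges (bd g) \<longrightarrow> c = p \<or> c = q"
    using face_nbrs[OF full fg(2) vg] by blast
  have "{v, p} \<in> E" "{v, q} \<in> E" using pq(2,3) edge_of_face[OF full fg(2)] by blast+
  then have "p \<in> neighbors E v" "q \<in> neighbors E v"
    unfolding neighbors_def by (simp_all add: insert_commute)
  then have pin: "p \<in> {a,b,c}" and qin: "q \<in> {a,b,c}" using nb by auto
  have "p \<noteq> c" "q \<noteq> c" using pq(2,3) nc by auto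
  then have "p = a \<or> q = a" using pin qin pq(1) by auto
  then have ga: "{v, a} \<in> cyc_edges (bd g)" using pq(2,3) by auto
  have "c \<in> neighbors E v" using nb by auto
  then have cE: "{v, c} \<in> E" unfolding neighbors_def by (simp add: insert_commute)
  have "card {h \<in> Fs. {v, c} \<in> cyc_edges (bd h)} = 2" using full_card[OF full cE] .
  then have "{h \<in> Fs. {v, c} \<in> cyc_edges (bd h)} \<noteq> {}" by (metis card.empty zero_neq_numeral)
  then obtain k where k: "k \<in> Fs" "{v, c} \<in> cyc_edges (bd k)" by blast
  have vf: "v \<in> set (bd f)" using fa cyc_edges_subset by blast
  obtain p' q' where pq': "p' \<noteq> q'" "\<forall>c. {v, c} \<in> cyc_edges (bd f) \<longrightarrow> c = p' \<or> c = q'"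
    using face_nbrs[OF full fg(1) vf] by blast
  have "a = p' \<or> a = q'" "b = p' \<or> b = q'" using pq'(2) fa fb by blast+
  then have nf: "{v, c} \<notin> cyc_edges (bd f)" using pq'(2) d by blast
  have vk: "v \<in> set (bd k)" using k cyc_edges_subset by blast
  obtain r s where rs: "r \<noteq> s" "{v, r} \<in> cyc_edges (bd k)" "{v, s} \<in> cyc_edges (bd k)"
    "\<forall>c. {v, c} \<in> cyc_edges (bd k) \<longrightarrow> c = r \<or> c = s"
    using face_nbrs[OF full k(1) vk] by blast
  have "{v, r} \<in> E" "{v, s} \<in> E" using rs(2,3) edge_of_face[OF full k(1)] by blast+
  then have "r \<in> neighbors E v" "s \<in> neighbors E v"
    unfolding neighbors_def by (simp_all add: insert_commute)
  then have "r \<in> {a,b,c}" "s \<in> {a,b,c}" using nb by auto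
  then have kab: "{v, a} \<in> cyc_edges (bd k) \<or> {v, b} \<in> cyc_edges (bd k)" using rs(1,2,3) by auto
  have kf: "f \<noteq> k" using k nf by auto
  have kg: "g \<noteq> k" using k nc by auto
  have aE: "{v, a} \<in> E" and bE: "{v, b} \<in> E" using fa fb edge_of_face[OF full fg(1)] by blast+
  from kab show False
  proof
    assume "{v, a} \<in> cyc_edges (bd k)"
    then show False using three_faces[OF full aE fg(1,2) k(1) fg(3) kf kg fa ga] by blast
  next
    assume "{v, b} \<in> cyc_edges (bd k)"
    then show False using three_faces[OF full bE fg(1,2) k(1) fg(3) kf kg fb gb] by blast
  qed
qed

lemma full_simple: "fullerene V E Fs bd \<Longrightarrow> simple_graph V E"
  unfolding fullerene_def by (elim conjE, assumption)

lemma full_cubic: "fullerene V E Fs bd \<Longrightarrow> cubic V E"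
  unfolding fullerene_def by (elim conjE, assumption)

lemma edge_V:
  assumes "fullerene V E Fs bd" "{u, w} \<in> E" shows "u \<in> V"
proof -
  have "simple_graph V E" using assms(1) by (rule full_simple)
  then obtain a b where "a \<in> V" "b \<in> V" "{u, w} = {a, b}"
    using assms(2) unfolding simple_graph_def by blast
  then show ?thesis by (metis doubleton_eq_iff)
qed

lemma nbr_card:
  assumes "fullerene V E Fs bd" "{u, w} \<in> E" shows "card (neighbors E u) = 3"
proof -
  have "cubic V E" using assms(1) by (rule full_cubic)
  moreover have "u \<in> V" using edge_V[OF assms] .
  ultimately show ?thesis unfolding cubic_def by blast
qed

lemma nbr_eq3:
  assumes "card (neighbors E u) = 3" "{u, a} \<in> E" "{u, b} \<in> E" "{u, c} \<in> E"
    "a \<noteq> b" "a \<noteq> c" "b \<noteq> c"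
  shows "neighbors E u = {a, b, c}"
proof -
  have fin: "finite (neighbors E u)" using assms(1) by (metis card.infinite zero_neq_numeral)
  have sub: "{a, b, c} \<subseteq> neighbors E u" using assms(2-4)
    unfolding neighbors_def by (auto simp: insert_commute)
  have "card {a, b, c} = 3" using assms(5-7) by simp
  then show ?thesis using card_subset_eq[OF fin sub] assms(1) by simp
qed

lemma nbr_four:
  assumes "card (neighbors E u) = 3" "{u, a} \<in> E" "{u, b} \<in> E" "{u, c} \<in> E" "{u, d} \<in> E"
    "a \<noteq> b" "a \<noteq> c" "b \<noteq> c" "a \<noteq> d" "b \<noteq> d" "c \<noteq> d"
  shows False
proof -
  have fin: "finite (neighbors E u)" using assms(1) by (metis card.infinite zero_neq_numeral)
  have sub: "{a, b, c, d} \<subseteq> neighbors E u" using assms(2-5)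
    unfolding neighbors_def by (auto simp: insert_commute)
  have "card {a, b, c, d} = 4" using assms(6-11) by simp
  then show False using card_mono[OF fin sub] assms(1) by simp
qed

lemma two_C_nbrs:
  assumes "distinct D" "length D \<ge> 3" "cyc_edges D \<subseteq> E" "t \<in> set D"
    "card (neighbors E t) = 3" "{t, a} \<in> E" "{t, b} \<in> E" "a \<noteq> b"
  shows "{t, a} \<in> cyc_edges D \<or> {t, b} \<in> cyc_edges D"
proof (rule ccontr)
  assume H: "\<not> ({t, a} \<in> cyc_edges D \<or> {t, b} \<in> cyc_edges D)"
  obtain p q where pq: "p \<noteq> q" "{t, p} \<in> cyc_edges D" "{t, q} \<in> cyc_edges D"
    using cycle_nbrs[OF assms(1,2,4)] by blast
  have "{t, p} \<in> E" "{t, q} \<in> E" using pq assms(3) by blast+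
  moreover have "a \<noteq> p" "a \<noteq> q" "b \<noteq> p" "b \<noteq> q" using H pq by auto
  ultimately show False using nbr_four[OF assms(5,6,7)] pq(1) assms(8) by blast
qed

lemma longer_contra:
  assumes "\<forall>ys. is_cycle E ys \<longrightarrow> length ys \<le> length D" "distinct N" "length N > length D"
    "length D \<ge> 3" "pedges N \<subseteq> E" "{last N, hd N} \<in> E"
  shows False
proof -
  have "N \<noteq> []" using assms(3,4) by auto
  then have "cyc_edges N \<subseteq> E" using assms(5,6) cyc_edges_pedges by (metis insert_subset)
  then have "is_cycle E N" using assms(2-4) unfolding is_cycle_def by auto
  then show False using assms(1,3) by fastforce
qed

lemmas pe_simps = pedges_Cons2 pedges_append hd_append last_append pedges_rev hd_rev last_rev

context
  fixes E :: "'a set set" and D P1 Q1 :: "'a list" and v1 v2 v3 v4 v5 v6 x y :: 'a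
  assumes lc: "\<forall>ys. is_cycle E ys \<longrightarrow> length ys \<le> length D"
    and D: "D = v3 # v4 # y # P1 @ [v5, v6] @ Q1 @ [x]"
    and dD: "distinct D" and DE: "cyc_edges D \<subseteq> E"
    and w: "v1 \<notin> set D" "v2 \<notin> set D" "v1 \<noteq> v2"
    and fE: "{v1,v2} \<in> E" "{v2,v3} \<in> E" "{v3,v4} \<in> E" "{v4,v5} \<in> E" "{v5,v6} \<in> E" "{v6,v1} \<in> E"
begin

lemma pD: "pedges D \<subseteq> E" "{x, v3} \<in> E"
  using DE cyc_edges_pedges[of D] D by auto

lemma pD2: "pedges (v3 # v4 # y # P1 @ [v5, v6] @ Q1 @ [x]) \<subseteq> E"
  using pD D by simp

lemma Dfacts: "{v4, y} \<in> E" "pedges P1 \<subseteq> E" "pedges Q1 \<subseteq> E"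
  "P1 = [] \<Longrightarrow> {y, v5} \<in> E" "P1 \<noteq> [] \<Longrightarrow> {y, hd P1} \<in> E" "P1 \<noteq> [] \<Longrightarrow> {last P1, v5} \<in> E"
  "Q1 = [] \<Longrightarrow> {v6, x} \<in> E" "Q1 \<noteq> [] \<Longrightarrow> {v6, hd Q1} \<in> E" "Q1 \<noteq> [] \<Longrightarrow> {last Q1, x} \<in> E"
  using pD2 by (simp_all del: pedges.simps(1) add: pe_simps split: if_splits)

lemma Ddist: "distinct (y # P1)" "distinct Q1" "v3 \<notin> set (y # P1) \<union> set Q1 \<union> {x, v4, v5, v6}"
  "v4 \<notin> set (y # P1) \<union> set Q1 \<union> {x, v5, v6}" "v5 \<notin> set (y # P1) \<union> set Q1 \<union> {x, v6}"
  "v6 \<notin> set (y # P1) \<union> set Q1 \<union> {x}" "x \<notin> set (y # P1) \<union> set Q1" "set (y # P1) \<inter> set Q1 = {}"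
  using dD D by auto

lemma Wd: "v1 \<notin> set (y # P1) \<union> set Q1 \<union> {x, v3, v4, v5, v6}" "v2 \<notin> set (y # P1) \<union> set Q1 \<union> {x, v3, v4, v5, v6}"
  using w D by auto

lemma Dlen: "length D = length P1 + length Q1 + 6" "length D \<ge> 3" using D by auto

lemmas DF = Dfacts Ddist Dlen Wd w(3) fE pD(2)

lemma X1: "{x, v1} \<notin> E"
proof
  assume a: "{x, v1} \<in> E"
  let ?N = "v4 # (y # P1) @ [v5,v6] @ Q1 @ [x] @ [v1,v2,v3]"
  show False
  proof (rule longer_contra[OF lc, of ?N])
    show "distinct ?N" using DF by auto
    show "length D < length ?N" using DF by simp
    show "pedges ?N \<subseteq> E" using DF a
      by (simp del: pedges.simps(1) add: pe_simps insert_commute split: if_splits)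
    show "{last ?N, hd ?N} \<in> E" using DF by simp
  qed (use DF in auto)
qed


lemma X2c:
  assumes "{x, v2} \<in> E"
  shows False
proof (rule longer_contra[OF lc, of "v4 # (y # P1) @ [v5,v6] @ Q1 @ [x] @ [v2,v3]"])
  show "distinct (v4 # (y # P1) @ [v5,v6] @ Q1 @ [x] @ [v2,v3])" using DF assms D by auto
  show "length D < length (v4 # (y # P1) @ [v5,v6] @ Q1 @ [x] @ [v2,v3])" using DF by simp
  show "pedges (v4 # (y # P1) @ [v5,v6] @ Q1 @ [x] @ [v2,v3]) \<subseteq> E" using DF assms
    by (simp del: pedges.simps(1) add: pe_simps insert_commute split: if_splits)
  show "{last (v4 # (y # P1) @ [v5,v6] @ Q1 @ [x] @ [v2,v3]), hd (v4 # (y # P1) @ [v5,v6] @ Q1 @ [x] @ [v2,v3])} \<in> E" using DF assms by (simp add: insert_commute)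
qed (use DF in auto)

lemma Y1c:
  assumes "{y, v1} \<in> E"
  shows False
proof (rule longer_contra[OF lc, of "(y # P1) @ [v5,v4,v3] @ rev (Q1 @ [x]) @ [v6,v1]"])
  show "distinct ((y # P1) @ [v5,v4,v3] @ rev (Q1 @ [x]) @ [v6,v1])" using DF assms D by auto
  show "length D < length ((y # P1) @ [v5,v4,v3] @ rev (Q1 @ [x]) @ [v6,v1])" using DF by simp
  show "pedges ((y # P1) @ [v5,v4,v3] @ rev (Q1 @ [x]) @ [v6,v1]) \<subseteq> E" using DF assms
    by (simp del: pedges.simps(1) add: pe_simps insert_commute split: if_splits)
  show "{last ((y # P1) @ [v5,v4,v3] @ rev (Q1 @ [x]) @ [v6,v1]), hd ((y # P1) @ [v5,v4,v3] @ rev (Q1 @ [x]) @ [v6,v1])} \<in> E" using DF assms by (simp add: insert_commute)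
qed (use DF in auto)

lemma Y2c:
  assumes "{y, v2} \<in> E"
  shows False
proof (rule longer_contra[OF lc, of "(y # P1) @ [v5,v4,v3] @ rev (Q1 @ [x]) @ [v6,v1,v2]"])
  show "distinct ((y # P1) @ [v5,v4,v3] @ rev (Q1 @ [x]) @ [v6,v1,v2])" using DF assms D by auto
  show "length D < length ((y # P1) @ [v5,v4,v3] @ rev (Q1 @ [x]) @ [v6,v1,v2])" using DF by simp
  show "pedges ((y # P1) @ [v5,v4,v3] @ rev (Q1 @ [x]) @ [v6,v1,v2]) \<subseteq> E" using DF assms
    by (simp del: pedges.simps(1) add: pe_simps insert_commute split: if_splits)
  show "{last ((y # P1) @ [v5,v4,v3] @ rev (Q1 @ [x]) @ [v6,v1,v2]), hd ((y # P1) @ [v5,v4,v3] @ rev (Q1 @ [x]) @ [v6,v1,v2])} \<in> E" using DF assms by (simp add: insert_commute)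
qed (use DF in auto)

lemma X2: "{x, v2} \<notin> E" using X2c by blast
lemma Y1: "{y, v1} \<notin> E" using Y1c by blast
lemma Y2: "{y, v2} \<notin> E" using Y2c by blast


lemma P_out:
  assumes "{y, t} \<in> E" "{t, x} \<in> E" "t \<notin> set D" "t \<noteq> v1" "t \<noteq> v2"
  shows False
proof (rule longer_contra[OF lc, of "t # (y # P1) @ [v5,v4,v3,v2,v1,v6] @ Q1 @ [x]"])
  show "distinct (t # (y # P1) @ [v5,v4,v3,v2,v1,v6] @ Q1 @ [x])" using DF assms D by auto
  show "length D < length (t # (y # P1) @ [v5,v4,v3,v2,v1,v6] @ Q1 @ [x])" using DF assms by simp
  show "pedges (t # (y # P1) @ [v5,v4,v3,v2,v1,v6] @ Q1 @ [x]) \<subseteq> E" using DF assms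
    by (simp del: pedges.simps(1) add: pe_simps insert_commute split: if_splits)
  show "{last (t # (y # P1) @ [v5,v4,v3,v2,v1,v6] @ Q1 @ [x]), hd (t # (y # P1) @ [v5,v4,v3,v2,v1,v6] @ Q1 @ [x])} \<in> E" using DF assms by (simp add: insert_commute)
qed (use DF in auto)

lemma P_y1:
  assumes "{t, x} \<in> E" "P1 = []" "t = v5"
  shows False
proof (rule longer_contra[OF lc, of "[v5,v4,v3,v2,v1,v6] @ Q1 @ [x]"])
  show "distinct ([v5,v4,v3,v2,v1,v6] @ Q1 @ [x])" using DF assms D by auto
  show "length D < length ([v5,v4,v3,v2,v1,v6] @ Q1 @ [x])" using DF assms by simp
  show "pedges ([v5,v4,v3,v2,v1,v6] @ Q1 @ [x]) \<subseteq> E" using DF assms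
    by (simp del: pedges.simps(1) add: pe_simps insert_commute split: if_splits)
  show "{last ([v5,v4,v3,v2,v1,v6] @ Q1 @ [x]), hd ([v5,v4,v3,v2,v1,v6] @ Q1 @ [x])} \<in> E" using DF assms by (simp add: insert_commute)
qed (use DF in auto)

lemma P_y2:
  assumes "{t, x} \<in> E" "P1 = t # P2"
  shows False
proof (rule longer_contra[OF lc, of "t # P2 @ [v5,v4,v3,v2,v1,v6] @ Q1 @ [x]"])
  show "distinct (t # P2 @ [v5,v4,v3,v2,v1,v6] @ Q1 @ [x])" using DF assms D by auto
  show "length D < length (t # P2 @ [v5,v4,v3,v2,v1,v6] @ Q1 @ [x])" using DF assms by simp
  show "pedges (t # P2 @ [v5,v4,v3,v2,v1,v6] @ Q1 @ [x]) \<subseteq> E" using DF assms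
    by (simp del: pedges.simps(1) add: pe_simps insert_commute split: if_splits)
  show "{last (t # P2 @ [v5,v4,v3,v2,v1,v6] @ Q1 @ [x]), hd (t # P2 @ [v5,v4,v3,v2,v1,v6] @ Q1 @ [x])} \<in> E" using DF assms by (simp add: insert_commute)
qed (use DF in auto)

lemma P_x1:
  assumes "{y, t} \<in> E" "Q1 = []" "t = v6"
  shows False
proof (rule longer_contra[OF lc, of "(y # P1) @ [v5,v4,v3,v2,v1,v6]"])
  show "distinct ((y # P1) @ [v5,v4,v3,v2,v1,v6])" using DF assms D by auto
  show "length D < length ((y # P1) @ [v5,v4,v3,v2,v1,v6])" using DF assms by simp
  show "pedges ((y # P1) @ [v5,v4,v3,v2,v1,v6]) \<subseteq> E" using DF assms
    by (simp del: pedges.simps(1) add: pe_simps insert_commute split: if_splits)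
  show "{last ((y # P1) @ [v5,v4,v3,v2,v1,v6]), hd ((y # P1) @ [v5,v4,v3,v2,v1,v6])} \<in> E" using DF assms by (simp add: insert_commute)
qed (use DF in auto)

lemma P_x2:
  assumes "{y, t} \<in> E" "Q1 = Q2 @ [t]"
  shows False
proof (rule longer_contra[OF lc, of "(y # P1) @ [v5,v4,v3,v2,v1,v6] @ Q2 @ [t]"])
  show "distinct ((y # P1) @ [v5,v4,v3,v2,v1,v6] @ Q2 @ [t])" using DF assms D by auto
  show "length D < length ((y # P1) @ [v5,v4,v3,v2,v1,v6] @ Q2 @ [t])" using DF assms by simp
  show "pedges ((y # P1) @ [v5,v4,v3,v2,v1,v6] @ Q2 @ [t]) \<subseteq> E" using DF assms
    by (simp del: pedges.simps(1) add: pe_simps insert_commute split: if_splits)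
  show "{last ((y # P1) @ [v5,v4,v3,v2,v1,v6] @ Q2 @ [t]), hd ((y # P1) @ [v5,v4,v3,v2,v1,v6] @ Q2 @ [t])} \<in> E" using DF assms by (simp add: insert_commute)
qed (use DF in auto)

lemma H_out:
  assumes "{y, s} \<in> E" "{t, x} \<in> E" "{s, t} \<in> E" "s \<notin> set D" "t \<notin> set D" "s \<noteq> t" "s \<noteq> v1" "s \<noteq> v2" "t \<noteq> v1" "t \<noteq> v2"
  shows False
proof (rule longer_contra[OF lc, of "(y # P1) @ [v5,v4,v3,v2,v1,v6] @ Q1 @ [x] @ [t, s]"])
  show "distinct ((y # P1) @ [v5,v4,v3,v2,v1,v6] @ Q1 @ [x] @ [t, s])" using DF assms D by auto
  show "length D < length ((y # P1) @ [v5,v4,v3,v2,v1,v6] @ Q1 @ [x] @ [t, s])" using DF assms by simp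
  show "pedges ((y # P1) @ [v5,v4,v3,v2,v1,v6] @ Q1 @ [x] @ [t, s]) \<subseteq> E" using DF assms
    by (simp del: pedges.simps(1) add: pe_simps insert_commute split: if_splits)
  show "{last ((y # P1) @ [v5,v4,v3,v2,v1,v6] @ Q1 @ [x] @ [t, s]), hd ((y # P1) @ [v5,v4,v3,v2,v1,v6] @ Q1 @ [x] @ [t, s])} \<in> E" using DF assms by (simp add: insert_commute)
qed (use DF in auto)

lemma H_x1:
  assumes "{y, s} \<in> E" "{s, t} \<in> E" "s \<notin> set D" "s \<noteq> v1" "s \<noteq> v2" "Q1 = []" "t = v6"
  shows False
proof (rule longer_contra[OF lc, of "(y # P1) @ [v5,v4,v3,v2,v1,v6,s]"])
  show "distinct ((y # P1) @ [v5,v4,v3,v2,v1,v6,s])" using DF assms D by auto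
  show "length D < length ((y # P1) @ [v5,v4,v3,v2,v1,v6,s])" using DF assms by simp
  show "pedges ((y # P1) @ [v5,v4,v3,v2,v1,v6,s]) \<subseteq> E" using DF assms
    by (simp del: pedges.simps(1) add: pe_simps insert_commute split: if_splits)
  show "{last ((y # P1) @ [v5,v4,v3,v2,v1,v6,s]), hd ((y # P1) @ [v5,v4,v3,v2,v1,v6,s])} \<in> E" using DF assms by (simp add: insert_commute)
qed (use DF in auto)

lemma H_x2:
  assumes "{y, s} \<in> E" "{s, t} \<in> E" "s \<notin> set D" "s \<noteq> v1" "s \<noteq> v2" "Q1 = Q2 @ [t]"
  shows False
proof (rule longer_contra[OF lc, of "(y # P1) @ [v5,v4,v3,v2,v1,v6] @ Q2 @ [t, s]"])
  show "distinct ((y # P1) @ [v5,v4,v3,v2,v1,v6] @ Q2 @ [t, s])" using DF assms D by auto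
  show "length D < length ((y # P1) @ [v5,v4,v3,v2,v1,v6] @ Q2 @ [t, s])" using DF assms by simp
  show "pedges ((y # P1) @ [v5,v4,v3,v2,v1,v6] @ Q2 @ [t, s]) \<subseteq> E" using DF assms
    by (simp del: pedges.simps(1) add: pe_simps insert_commute split: if_splits)
  show "{last ((y # P1) @ [v5,v4,v3,v2,v1,v6] @ Q2 @ [t, s]), hd ((y # P1) @ [v5,v4,v3,v2,v1,v6] @ Q2 @ [t, s])} \<in> E" using DF assms by (simp add: insert_commute)
qed (use DF in auto)

lemma H_y1:
  assumes "{t, x} \<in> E" "{s, t} \<in> E" "t \<notin> set D" "t \<noteq> v1" "t \<noteq> v2" "P1 = []" "s = v5"
  shows False
proof (rule longer_contra[OF lc, of "[v5,v4,v3,v2,v1,v6] @ Q1 @ [x, t]"])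
  show "distinct ([v5,v4,v3,v2,v1,v6] @ Q1 @ [x, t])" using DF assms D by auto
  show "length D < length ([v5,v4,v3,v2,v1,v6] @ Q1 @ [x, t])" using DF assms by simp
  show "pedges ([v5,v4,v3,v2,v1,v6] @ Q1 @ [x, t]) \<subseteq> E" using DF assms
    by (simp del: pedges.simps(1) add: pe_simps insert_commute split: if_splits)
  show "{last ([v5,v4,v3,v2,v1,v6] @ Q1 @ [x, t]), hd ([v5,v4,v3,v2,v1,v6] @ Q1 @ [x, t])} \<in> E" using DF assms by (simp add: insert_commute)
qed (use DF in auto)

lemma H_y2:
  assumes "{t, x} \<in> E" "{s, t} \<in> E" "t \<notin> set D" "t \<noteq> v1" "t \<noteq> v2" "P1 = s # P2"
  shows False
proof (rule longer_contra[OF lc, of "s # P2 @ [v5,v4,v3,v2,v1,v6] @ Q1 @ [x, t]"])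
  show "distinct (s # P2 @ [v5,v4,v3,v2,v1,v6] @ Q1 @ [x, t])" using DF assms D by auto
  show "length D < length (s # P2 @ [v5,v4,v3,v2,v1,v6] @ Q1 @ [x, t])" using DF assms by simp
  show "pedges (s # P2 @ [v5,v4,v3,v2,v1,v6] @ Q1 @ [x, t]) \<subseteq> E" using DF assms
    by (simp del: pedges.simps(1) add: pe_simps insert_commute split: if_splits)
  show "{last (s # P2 @ [v5,v4,v3,v2,v1,v6] @ Q1 @ [x, t]), hd (s # P2 @ [v5,v4,v3,v2,v1,v6] @ Q1 @ [x, t])} \<in> E" using DF assms by (simp add: insert_commute)
qed (use DF in auto)


lemma lenD: "length D \<ge> 3" using D by simp

lemma succ_y:
  assumes "{y, t} \<in> cyc_edges D" "t \<noteq> v4"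
  shows "(P1 = [] \<and> t = v5) \<or> (\<exists>P2. P1 = t # P2)"
proof -
  have D': "D = [v3, v4] @ y # (P1 @ [v5, v6] @ Q1 @ [x])" using D by simp
  have "t = hd ((P1 @ [v5, v6] @ Q1 @ [x]) @ [v3, v4]) \<or> t = last ((P1 @ [v5, v6] @ Q1 @ [x]) @ [v3, v4])"
    using nbr_in_cycle[of "[v3, v4]" y "P1 @ [v5, v6] @ Q1 @ [x]" t] assms(1) dD D' by simp
  then have "t = hd (P1 @ [v5, v6] @ Q1 @ [x])" using assms(2) by (cases P1) auto
  then show ?thesis by (cases P1) auto
qed

lemma pred_x:
  assumes "{x, t} \<in> cyc_edges D" "t \<noteq> v3"
  shows "(Q1 = [] \<and> t = v6) \<or> (\<exists>Q2. Q1 = Q2 @ [t])"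
proof -
  have D': "D = (v3 # v4 # y # P1 @ [v5, v6] @ Q1) @ x # []" using D by simp
  have "t = hd ([] @ (v3 # v4 # y # P1 @ [v5, v6] @ Q1)) \<or> t = last ([] @ (v3 # v4 # y # P1 @ [v5, v6] @ Q1))"
    using nbr_in_cycle[of "v3 # v4 # y # P1 @ [v5, v6] @ Q1" x "[]" t] assms(1) dD D' by simp
  then have "t = last (v6 # Q1)" using assms(2) by simp
  then show ?thesis by (cases Q1 rule: rev_cases) auto
qed

lemma pent:
  assumes "{y, t} \<in> E" "{t, x} \<in> E" "t \<noteq> v3" "t \<noteq> v4" "t \<noteq> x" "t \<noteq> y"
    "card (neighbors E t) = 3"
  shows False
proof (cases "t \<in> set D")
  case False
  have "t \<noteq> v1" using X1 assms(2) by (auto simp: insert_commute)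
  moreover have "t \<noteq> v2" using X2 assms(2) by (auto simp: insert_commute)
  ultimately show False using P_out[OF assms(1,2) False] by blast
next
  case True
  have "{t, y} \<in> E" using assms(1) by (simp add: insert_commute)
  moreover have "y \<noteq> x" using DF by auto
  ultimately have "{t, y} \<in> cyc_edges D \<or> {t, x} \<in> cyc_edges D"
    using two_C_nbrs[OF dD lenD DE True assms(7) _ assms(2)] by blast
  then show False
  proof
    assume "{t, y} \<in> cyc_edges D"
    then have "{y, t} \<in> cyc_edges D" by (simp add: insert_commute)
    then have "(P1 = [] \<and> t = v5) \<or> (\<exists>P2. P1 = t # P2)" using succ_y assms(4) by blast
    then show False using P_y1 P_y2 assms(2) by blast
  next
    assume "{t, x} \<in> cyc_edges D"
    then have "{x, t} \<in> cyc_edges D" by (simp add: insert_commute)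
    then have "(Q1 = [] \<and> t = v6) \<or> (\<exists>Q2. Q1 = Q2 @ [t])" using pred_x assms(3) by blast
    then show False using P_x1 P_x2 assms(1) by blast
  qed
qed

lemma hex:
  assumes "{y, s} \<in> E" "{s, t} \<in> E" "{t, x} \<in> E" "distinct [v3, v4, y, s, t, x]"
    "card (neighbors E t) = 3" "card (neighbors E s) = 3"
  shows "s \<in> set D \<and> t \<in> set D"
proof -
  have s1: "s \<noteq> v1" using Y1 assms(1) by auto
  have s2: "s \<noteq> v2" using Y2 assms(1) by auto
  have t1: "t \<noteq> v1" using X1 assms(3) by (auto simp: insert_commute)
  have t2: "t \<noteq> v2" using X2 assms(3) by (auto simp: insert_commute)
  have st: "s \<noteq> t" using assms(4) by auto
  show ?thesis
  proof (cases "s \<in> set D"; cases "t \<in> set D")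
    assume "s \<in> set D" "t \<in> set D" then show ?thesis by blast
  next
    assume sD: "s \<notin> set D" and tD: "t \<notin> set D"
    show ?thesis using H_out[OF assms(1,3,2) sD tD st s1 s2 t1 t2] by blast
  next
    assume sD: "s \<notin> set D" and tD: "t \<in> set D"
    have ts: "{t, s} \<in> E" using assms(2) by (simp add: insert_commute)
    have "x \<noteq> s" using assms(4) by auto
    then have "{t, x} \<in> cyc_edges D \<or> {t, s} \<in> cyc_edges D"
      using two_C_nbrs[OF dD lenD DE tD assms(5) assms(3) ts] by blast
    moreover have "{t, s} \<notin> cyc_edges D" using sD cyc_edges_subset by blast
    ultimately have "{x, t} \<in> cyc_edges D" by (simp add: insert_commute)
    then have "(Q1 = [] \<and> t = v6) \<or> (\<exists>Q2. Q1 = Q2 @ [t])" using pred_x assms(4) by auto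
    then show ?thesis using H_x1[OF assms(1,2) sD s1 s2] H_x2[OF assms(1,2) sD s1 s2] by blast
  next
    assume sD: "s \<in> set D" and tD: "t \<notin> set D"
    have sy: "{s, y} \<in> E" using assms(1) by (simp add: insert_commute)
    have "y \<noteq> t" using assms(4) by auto
    then have "{s, y} \<in> cyc_edges D \<or> {s, t} \<in> cyc_edges D"
      using two_C_nbrs[OF dD lenD DE sD assms(6) sy assms(2)] by blast
    moreover have "{s, t} \<notin> cyc_edges D" using tD cyc_edges_subset by blast
    ultimately have "{y, s} \<in> cyc_edges D" by (simp add: insert_commute)
    then have "(P1 = [] \<and> s = v5) \<or> (\<exists>P2. P1 = s # P2)" using succ_y assms(4) by auto
    then show ?thesis using H_y1[OF assms(3,2) tD t1 t2] H_y2[OF assms(3,2) tD t1 t2] by blast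
  qed
qed

end

lemma bad_orient:
  assumes lc: "\<forall>ys. is_cycle E ys \<longrightarrow> length ys \<le> length D"
    and D: "D = v3 # v4 # P @ [v6, v5] @ W" and dD: "distinct D" and DE: "cyc_edges D \<subseteq> E"
    and w: "v1 \<notin> set D" "v2 \<notin> set D" "v1 \<noteq> v2"
    and fE: "{v1,v2} \<in> E" "{v2,v3} \<in> E" "{v4,v5} \<in> E" "{v6,v1} \<in> E"
  shows False
proof -
  have pD: "pedges D \<subseteq> E" "{last D, hd D} \<in> E" using DE cyc_edges_pedges[of D] D by auto
  let ?N = "v4 # P @ [v6, v1, v2, v3] @ rev W @ [v5]"
  show False
  proof (rule longer_contra[OF lc, of ?N])
    show "distinct ?N" using dD w D by auto
    show "length D < length ?N" using D by simp
    show "length D \<ge> 3" using D by simp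
    show "pedges ?N \<subseteq> E" using pD fE D
      by (simp del: pedges.simps(1) add: pe_simps insert_commute split: if_splits)
    show "{last ?N, hd ?N} \<in> E" using fE by (simp add: insert_commute)
  qed
qed

lemma Q_empty:
  assumes lc: "\<forall>ys. is_cycle E ys \<longrightarrow> length ys \<le> length D"
    and D: "D = v3 # v4 # P @ [v5, v6]" and dD: "distinct D" and DE: "cyc_edges D \<subseteq> E"
    and w: "v1 \<notin> set D" "v2 \<notin> set D" "v1 \<noteq> v2"
    and fE: "{v1,v2} \<in> E" "{v2,v3} \<in> E" "{v4,v5} \<in> E" "{v6,v1} \<in> E"
  shows False
proof -
  have pD: "pedges D \<subseteq> E" "{last D, hd D} \<in> E" using DE cyc_edges_pedges[of D] D by auto
  let ?N = "[v3, v2, v1, v6, v5] @ rev P @ [v4]"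
  show False
  proof (rule longer_contra[OF lc, of ?N])
    show "distinct ?N" using dD w D by auto
    show "length D < length ?N" using D by simp
    show "length D \<ge> 3" using D by simp
    show "pedges ?N \<subseteq> E" using pD fE D
      by (simp del: pedges.simps(1) add: pe_simps insert_commute split: if_splits)
    show "{last ?N, hd ?N} \<in> E" using pD D by (simp add: insert_commute)
  qed
qed


lemma len3: "length xs = 3 \<Longrightarrow> \<exists>a b c. xs = [a, b, c]"
proof -
  assume "length xs = 3"
  then have "length xs = Suc (Suc (Suc 0))" by simp
  then show ?thesis by (auto simp: length_Suc_conv)
qed

lemma len4: "length xs = 4 \<Longrightarrow> \<exists>a b c d. xs = [a, b, c, d]"
proof -
  assume "length xs = 4"
  then have "length xs = Suc (Suc (Suc (Suc 0)))" by simp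
  then show ?thesis by (auto simp: length_Suc_conv)
qed

lemma geo:
  assumes full: "fullerene V E Fs bd" and lc: "longest_cycle E C"
    and fF: "f \<in> Fs" and gF: "g \<in> Fs" and gf: "g \<noteq> f"
    and dist6: "distinct [v1, v2, v3, v4, v5, v6]"
    and f23: "{v2, v3} \<in> cyc_edges (bd f)" and f34: "{v3, v4} \<in> cyc_edges (bd f)"
    and f45: "{v4, v5} \<in> cyc_edges (bd f)"
    and fE: "{v1,v2} \<in> E" "{v2,v3} \<in> E" "{v3,v4} \<in> E" "{v4,v5} \<in> E" "{v5,v6} \<in> E" "{v6,v1} \<in> E"
    and w: "v1 \<notin> set C" "v2 \<notin> set C"
    and e34: "{v3, v4} \<in> cyc_edges C" and e56: "{v5, v6} \<in> cyc_edges C"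
    and n45: "{v4, v5} \<notin> cyc_edges C"
    and g34: "{v3, v4} \<in> cyc_edges (bd g)"
  shows "length (bd g) = 6 \<and> set (bd g) \<subseteq> set C \<and>
    (\<forall>e\<in>cyc_edges (bd g). e \<noteq> {v3, v4} \<and> e \<inter> {v3, v4} \<noteq> {} \<longrightarrow> e \<in> cyc_edges C)"
proof -
  have cC: "is_cycle E C" and lcC: "\<forall>ys. is_cycle E ys \<longrightarrow> length ys \<le> length C"
    using lc unfolding longest_cycle_def by auto
  have dC: "distinct C" "length C \<ge> 3" "cyc_edges C \<subseteq> E" using cC unfolding is_cycle_def by auto
  obtain R0 where R0: "cyc_edges (v3 # v4 # R0) = cyc_edges C" "set (v3 # v4 # R0) = set C"
     "distinct (v3 # v4 # R0)" "length (v3 # v4 # R0) = length C"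
    using norm_cycle[OF dC(1,2) e34] by blast
  define D0 where "D0 = v3 # v4 # R0"
  have D0: "cyc_edges D0 = cyc_edges C" "set D0 = set C" "distinct D0" "length D0 = length C"
    using R0 D0_def by auto
  have lc0: "\<forall>ys. is_cycle E ys \<longrightarrow> length ys \<le> length D0" using lcC D0 by simp
  have DE0: "cyc_edges D0 \<subseteq> E" using D0 dC by simp
  have w0: "v1 \<notin> set D0" "v2 \<notin> set D0" "v1 \<noteq> v2" using w D0 dist6 by auto
  have "v5 \<in> set D0" using e56 D0(1) cyc_edges_subset by blast
  then have "v5 \<in> set R0" using dist6 D0_def by auto
  then obtain P W where RW: "R0 = P @ v5 # W" by (meson split_list)
  have D0': "D0 = (v3 # v4 # P) @ v5 # W" using D0_def RW by simp
  have "{v5, v6} \<in> cyc_edges ((v3 # v4 # P) @ v5 # W)" using e56 D0 D0' by simp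
  then have "v6 = hd (W @ (v3 # v4 # P)) \<or> v6 = last (W @ (v3 # v4 # P))"
    using nbr_in_cycle[of "v3 # v4 # P" v5 W v6] D0(3) D0' by simp
  then obtain Q where DQ: "D0 = v3 # v4 # P @ [v5, v6] @ Q"
  proof
    assume h: "v6 = hd (W @ v3 # v4 # P)"
    show ?thesis
    proof (cases W)
      case Nil then show ?thesis using h dist6 by simp
    next
      case (Cons a W')
      then have "W = v6 # W'" using h by simp
      then show ?thesis using that D0' by simp
    qed
  next
    assume h: "v6 = last (W @ v3 # v4 # P)"
    show ?thesis
    proof (cases P rule: rev_cases)
      case Nil then show ?thesis using h dist6 by simp
    next
      case (snoc P' a)
      then have "P = P' @ [v6]" using h by simp
      then have "D0 = v3 # v4 # P' @ [v6, v5] @ W" using D0' by simp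
      then show ?thesis using bad_orient[OF lc0 _ D0(3) DE0 w0 fE(1,2,4,6)] by blast
    qed
  qed
  have "P \<noteq> []"
  proof
    assume "P = []"
    then have "{v4, v5} \<in> pedges D0" using DQ by simp
    then show False using n45 D0(1) cyc_edges_pedges[of D0] DQ by auto
  qed
  then obtain y P1 where P: "P = y # P1" by (cases P) auto
  have "Q \<noteq> []"
  proof
    assume "Q = []"
    then show False using Q_empty[OF lc0 _ D0(3) DE0 w0 fE(1,2,4,6)] DQ by simp
  qed
  then obtain Q1 x where Q: "Q = Q1 @ [x]" by (cases Q rule: rev_cases) auto
  have DD: "D0 = v3 # v4 # y # P1 @ [v5, v6] @ Q1 @ [x]" using DQ P Q by simp
  note ctx = lc0 DD D0(3) DE0 w0 fE
  have xv3: "{x, v3} \<in> E" using pD(2)[OF ctx] .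
  have v4y: "{v4, y} \<in> E" using Dfacts(1)[OF ctx] .
  have dd: "v2 \<noteq> x" "v4 \<noteq> x" "v3 \<noteq> y" "v5 \<noteq> y" "v3 \<noteq> x" "v4 \<noteq> y" "x \<noteq> y"
    using Ddist[OF ctx] Wd[OF ctx] by auto
  have c3: "card (neighbors E v3) = 3" using nbr_card[OF full fE(3)] .
  have nb3: "neighbors E v3 = {v2, v4, x}"
    using nbr_eq3[OF c3] fE xv3 dd dist6 by (simp add: insert_commute)
  have c4: "card (neighbors E v4) = 3" using nbr_card[OF full fE(4)] .
  have nb4: "neighbors E v4 = {v5, v3, y}"
    using nbr_eq3[OF c4] fE v4y dd dist6 by (simp add: insert_commute)
  have gx: "{v3, x} \<in> cyc_edges (bd g)"
    using rot_vertex[OF full fF gF gf[symmetric] _ f34 g34 nb3] f23 dd dist6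
    by (simp add: insert_commute)
  have f43: "{v4, v3} \<in> cyc_edges (bd f)" and g43: "{v4, v3} \<in> cyc_edges (bd g)"
    using f34 g34 by (simp_all add: insert_commute)
  have "v5 \<noteq> v3" "v5 \<noteq> y" "v3 \<noteq> y" using dd dist6 by auto
  then have gy: "{v4, y} \<in> cyc_edges (bd g)"
    by (rule rot_vertex[OF full fF gF gf[symmetric] f45 f43 g43 nb4])
  have cg: "is_cycle E (bd g)" "length (bd g) \<in> {5, 6}" using full_cycle[OF full gF] by auto
  have dg: "distinct (bd g)" "length (bd g) \<ge> 3" "cyc_edges (bd g) \<subseteq> E"
    using cg unfolding is_cycle_def by auto
  obtain R where M: "cyc_edges (v3 # v4 # R) = cyc_edges (bd g)" "set (v3 # v4 # R) = set (bd g)"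
     "distinct (v3 # v4 # R)" "length (v3 # v4 # R) = length (bd g)"
    using norm_cycle[OF dg(1,2) g34] by blast
  have Rne: "R \<noteq> []" using M(4) dg(2) by auto
  have "{v4, y} \<in> cyc_edges ([v3] @ v4 # R)" using gy M(1) by simp
  then have "y = hd (R @ [v3]) \<or> y = last (R @ [v3])"
    using nbr_in_cycle[of "[v3]" v4 R y] M(3) by simp
  then have yR: "y = hd R" using Rne dd by simp
  have "{v3, x} \<in> cyc_edges ([] @ v3 # (v4 # R))" using gx M(1) by simp
  then have "x = hd ((v4 # R) @ []) \<or> x = last ((v4 # R) @ [])"
    using nbr_in_cycle[of "[]" v3 "v4 # R" x] M(3) by simp
  then have xR: "x = last R" using Rne dd by simp
  have MEp: "pedges (v3 # v4 # R) \<subseteq> E" using M(1) dg(3) cyc_edges_pedges[of "v3 # v4 # R"] by auto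
  have lR: "length R = 3 \<or> length R = 4" using M(4) cg(2) by auto
  then obtain s t where Rst: "R = [y, s, t, x]"
  proof
    assume "length R = 3"
    then obtain a b c where "R = [a, b, c]" using len3 by blast
    then have R3: "R = [y, b, x]" using yR xR by simp
    have "{y, b} \<in> E" "{b, x} \<in> E" using MEp R3 by auto
    moreover have "b \<noteq> v3" "b \<noteq> v4" "b \<noteq> x" "b \<noteq> y" using M(3) R3 by auto
    moreover have "card (neighbors E b) = 3" using nbr_card[OF full] calculation(2) by blast
    ultimately show ?thesis using pent[OF ctx] by blast
  next
    assume "length R = 4"
    then obtain a b c d where "R = [a, b, c, d]" using len4 by blast
    then show ?thesis using that yR xR by simp
  qed
  have gE: "{y, s} \<in> E" "{s, t} \<in> E" "{t, x} \<in> E" using MEp Rst by auto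
  have dgl: "distinct [v3, v4, y, s, t, x]" using M(3) Rst by simp
  have cs: "card (neighbors E s) = 3" using nbr_card[OF full gE(2)] .
  have ct: "card (neighbors E t) = 3" using nbr_card[OF full gE(3)] .
  have st: "s \<in> set D0 \<and> t \<in> set D0" using hex[OF ctx gE dgl ct cs] .
  have L6: "length (bd g) = 6" using M(4) Rst by simp
  have setg: "set (bd g) \<subseteq> set C"
    using M(2) Rst st D0(2) DD by auto
  have cycM: "cyc_edges (bd g) = {{v3, v4}, {v4, y}, {y, s}, {s, t}, {t, x}, {x, v3}}"
    using M(1)[symmetric] Rst by (simp add: cyc_edges_pedges insert_commute)
  have cD: "cyc_edges D0 = insert {last D0, hd D0} (pedges D0)" using cyc_edges_pedges[of D0] DD by simp
  have "{v4, y} \<in> pedges D0" using DD by simp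
  then have "{v4, y} \<in> cyc_edges D0" using cD by blast
  moreover have "{x, v3} \<in> cyc_edges D0" using cD DD by simp
  ultimately have inC: "{v4, y} \<in> cyc_edges C" "{x, v3} \<in> cyc_edges C" using D0(1) by auto
  show ?thesis
  proof (intro conjI L6 setg ballI impI)
    fix e assume e: "e \<in> cyc_edges (bd g)" and ne: "e \<noteq> {v3, v4} \<and> e \<inter> {v3, v4} \<noteq> {}"
    have dis: "{y, s} \<inter> {v3, v4} = {}" "{s, t} \<inter> {v3, v4} = {}" "{t, x} \<inter> {v3, v4} = {}"
      using dgl by auto
    have "e \<in> {{v3, v4}, {v4, y}, {y, s}, {s, t}, {t, x}, {x, v3}}" using e cycM by simp
    then consider "e = {v3, v4}" | "e = {v4, y}" | "e = {y, s}" | "e = {s, t}" | "e = {t, x}" | "e = {x, v3}"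
      by blast
    then show "e \<in> cyc_edges C"
    proof cases
      case 1 then show ?thesis using ne by blast
    next
      case 2 then show ?thesis using inC by blast
    next
      case 3 then show ?thesis using ne dis by blast
    next
      case 4 then show ?thesis using ne dis by blast
    next
      case 5 then show ?thesis using ne dis by blast
    next
      case 6 then show ?thesis using inC by blast
    qed
  qed
qed

lemma fe_lt: "i < length (bd g) \<Longrightarrow> face_edge bd g i = {bd g ! i, bd g ! ((i + 1) mod length (bd g))}"
  unfolding face_edge_def by simp

lemma fe_in: assumes "length (bd g) > 0" shows "face_edge bd g j \<in> cyc_edges (bd g)"
proof -
  let ?n = "length (bd g)"
  have "(j mod ?n + 1) mod ?n = (j + 1) mod ?n" by (simp add: mod_Suc_eq)
  moreover have "j mod ?n < ?n" using assms by simp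
  ultimately show ?thesis unfolding face_edge_def cyc_edges_def
    by (intro CollectI exI[of _ "j mod ?n"]) simp
qed

lemma mod_lemma:
  fixes i j n :: nat
  assumes "i < n" "j < n" "3 \<le> n" "i = (j + 1) mod n" "j = (i + 1) mod n"
  shows False
proof (cases "j + 1 < n")
  case True
  have "(j + 1) mod n = j + 1" using True by (rule mod_less)
  then have i: "i = j + 1" using assms(4) by linarith
  show False
  proof (cases "i + 1 < n")
    case True
    have "(i + 1) mod n = i + 1" using True by (rule mod_less)
    then show False using assms(5) i by linarith
  next
    case False
    then have n: "i + 1 = n" using assms(1) by linarith
    then have "(i + 1) mod n = 0" by simp
    then have "j = 0" using assms(5) by linarith
    then show False using i n assms(3) by linarith
  qed
next
  case False
  then have n: "j + 1 = n" using assms(2) by linarith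
  then have "(j + 1) mod n = 0" by simp
  then have i: "i = 0" using assms(4) by linarith
  have "(i + 1) mod n = 1" using i assms(3) by simp
  then have "j = 1" using assms(5) by linarith
  then show False using n assms(3) by linarith
qed

lemma fe_unique:
  assumes "distinct (bd g)" "length (bd g) \<ge> 3" "i < length (bd g)" "j < length (bd g)"
    "face_edge bd g i = face_edge bd g j"
  shows "i = j"
proof -
  let ?L = "bd g" and ?n = "length (bd g)"
  have n0: "0 < ?n" using assms(2) by linarith
  have lt: "(i + 1) mod ?n < ?n" "(j + 1) mod ?n < ?n" using mod_less_divisor[OF n0] by blast+
  have "{?L ! i, ?L ! ((i + 1) mod ?n)} = {?L ! j, ?L ! ((j + 1) mod ?n)}"
    using assms(5) fe_lt[of i bd g] fe_lt[of j bd g] assms(3,4) by simp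
  then have "(?L ! i = ?L ! j \<and> ?L ! ((i + 1) mod ?n) = ?L ! ((j + 1) mod ?n)) \<or>
     (?L ! i = ?L ! ((j + 1) mod ?n) \<and> ?L ! ((i + 1) mod ?n) = ?L ! j)"
    by (simp only: doubleton_eq_iff)
  then show ?thesis
  proof
    assume "?L ! i = ?L ! j \<and> ?L ! ((i + 1) mod ?n) = ?L ! ((j + 1) mod ?n)"
    then show ?thesis using nth_eq_iff_index_eq[OF assms(1,3,4)] by blast
  next
    assume h: "?L ! i = ?L ! ((j + 1) mod ?n) \<and> ?L ! ((i + 1) mod ?n) = ?L ! j"
    then have "i = (j + 1) mod ?n" using nth_eq_iff_index_eq[OF assms(1) assms(3) lt(2)] by blast
    moreover have "j = (i + 1) mod ?n" using h nth_eq_iff_index_eq[OF assms(1) assms(4) lt(1)] by metis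
    ultimately show ?thesis using mod_lemma[OF assms(3,4,2)] by blast
  qed
qed

lemma count_edge:
  assumes "distinct (bd g)" "length (bd g) \<ge> 3"
  shows "(\<Sum>i<length (bd g). if face_edge bd g i = e then c else 0) = (if e \<in> cyc_edges (bd g) then c else (0::real))"
proof (cases "e \<in> cyc_edges (bd g)")
  case True
  then obtain i0 where i0: "i0 < length (bd g)" "e = {bd g ! i0, bd g ! ((i0 + 1) mod length (bd g))}"
    unfolding cyc_edges_def by auto
  then have fe0: "face_edge bd g i0 = e" using fe_lt by simp
  have "\<And>i. i \<in> {..<length (bd g)} \<Longrightarrow> (if face_edge bd g i = e then c else 0) = (if i = i0 then c else 0)"
  proof -
    fix i assume "i \<in> {..<length (bd g)}"
    then have "i < length (bd g)" by simp
    then have "face_edge bd g i = e \<longleftrightarrow> i = i0"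
      using fe_unique[of bd g i i0] assms i0(1) fe0 by auto
    then show "(if face_edge bd g i = e then c else 0) = (if i = i0 then c else 0)" by simp
  qed
  then have "(\<Sum>i<length (bd g). if face_edge bd g i = e then c else 0) = (\<Sum>i<length (bd g). if i = i0 then c else 0)"
    by (rule sum.cong[OF refl])
  also have "\<dots> = c" using i0(1) by simp
  finally show ?thesis using True by simp
next
  case False
  have "0 < length (bd g)" using assms(2) by linarith
  then have "\<And>i. face_edge bd g i \<noteq> e" using fe_in[of bd g] False by metis
  then show ?thesis using False by simp
qed

lemma other_face_eq:
  assumes full: "fullerene V E Fs bd" and "g \<in> Fs" "h \<in> Fs" "h \<noteq> g"
    "e \<in> cyc_edges (bd g)" "e \<in> cyc_edges (bd h)"
  shows "other_face Fs bd g e = h"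
  unfolding other_face_def
proof (rule the_equality)
  show "h \<in> Fs \<and> h \<noteq> g \<and> e \<in> cyc_edges (bd h)" using assms by blast
next
  fix k assume k: "k \<in> Fs \<and> k \<noteq> g \<and> e \<in> cyc_edges (bd k)"
  have eE: "e \<in> E" using edge_of_face[OF full assms(2,5)] .
  show "k = h"
  proof (rule ccontr)
    assume "k \<noteq> h"
    then show False using three_faces[OF full eE assms(2,3) _ assms(4)[symmetric] _ _ assms(5,6)] k by blast
  qed
qed

lemma other_face_ex:
  assumes full: "fullerene V E Fs bd" and "g \<in> Fs" "e \<in> cyc_edges (bd g)"
  shows "\<exists>h\<in>Fs. h \<noteq> g \<and> e \<in> cyc_edges (bd h)"
proof (rule ccontr)
  assume H: "\<not> (\<exists>h\<in>Fs. h \<noteq> g \<and> e \<in> cyc_edges (bd h))"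
  have eE: "e \<in> E" using edge_of_face[OF full assms(2,3)] .
  have "{h \<in> Fs. e \<in> cyc_edges (bd h)} \<subseteq> {g}" using H by blast
  moreover have "finite {g}" by simp
  ultimately have "card {h \<in> Fs. e \<in> cyc_edges (bd h)} \<le> card {g}"
    using card_mono by blast
  then have "card {h \<in> Fs. e \<in> cyc_edges (bd h)} \<le> 1" by simp
  then show False using full_card[OF full eE] by simp
qed

lemma of_f:
  assumes full: "fullerene V E Fs bd" and "g \<in> Fs" "e \<in> cyc_edges (bd g)" "other_face Fs bd g e = f"
  shows "f \<noteq> g \<and> e \<in> cyc_edges (bd f) \<and> f \<in> Fs"
proof -
  obtain h where h: "h \<in> Fs" "h \<noteq> g" "e \<in> cyc_edges (bd h)" using other_face_ex[OF full assms(2,3)] by blast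
  have "other_face Fs bd g e = h" using other_face_eq[OF full assms(2) h(1,2) assms(3) h(3)] .
  then show ?thesis using h assms(4) by simp
qed

lemma transfer_half:
  assumes full: "fullerene V E Fs bd" and gF: "g \<in> Fs"
    and geoR: "length (bd g) = 6 \<and> set (bd g) \<subseteq> set C \<and>
      (\<forall>e\<in>cyc_edges (bd g). e \<noteq> {a, b} \<and> e \<inter> {a, b} \<noteq> {} \<longrightarrow> e \<in> cyc_edges C)"
    and fe: "face_edge bd g i = {a, b}" and abC: "{a, b} \<in> cyc_edges C"
    and ofg: "other_face Fs bd g {a, b} = f" and wf: "white_face C bd f"
  shows "transfer Fs bd C g i = 1/2"
proof -
  let ?L = "bd g"
  have L6: "length ?L = 6" using geoR by blast
  have dL: "distinct ?L" using full_cycle[OF full gF] unfolding is_cycle_def by blast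
  have bl: "black_face C bd g" using geoR unfolding black_face_def white_verts_def by blast
  have i0: "i mod 6 < 6" "(i + 1) mod 6 < 6" "(i + 2) mod 6 < 6" "(i + 5) mod 6 < 6" by simp_all
  have neq: "(i + 2) mod 6 \<noteq> i mod 6" "(i + 2) mod 6 \<noteq> (i + 1) mod 6"
    "(i + 5) mod 6 \<noteq> i mod 6" "(i + 5) mod 6 \<noteq> (i + 1) mod 6" by presburger+
  have ab: "{a, b} = {?L ! (i mod 6), ?L ! ((i + 1) mod 6)}" using fe L6 unfolding face_edge_def by simp
  have fe1: "face_edge bd g (i + 1) = {?L ! ((i + 1) mod 6), ?L ! ((i + 2) mod 6)}"
    using L6 unfolding face_edge_def by (simp add: add.assoc)
  have fe5: "face_edge bd g (i + 5) = {?L ! ((i + 5) mod 6), ?L ! (i mod 6)}"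
  proof -
    have "(i + 5 + 1) mod 6 = i mod 6" by presburger
    then show ?thesis using L6 unfolding face_edge_def by simp
  qed
  have n2: "?L ! ((i + 2) mod 6) \<notin> {a, b}"
    using ab neq(1,2) nth_eq_iff_index_eq[OF dL] i0 L6 by auto
  have n5: "?L ! ((i + 5) mod 6) \<notin> {a, b}"
    using ab neq(3,4) nth_eq_iff_index_eq[OF dL] i0 L6 by auto
  have "face_edge bd g (i + 1) \<in> cyc_edges ?L" "face_edge bd g (i + 5) \<in> cyc_edges ?L"
    using fe_in[of bd g] L6 by simp_all
  moreover have "face_edge bd g (i + 1) \<noteq> {a, b}" "face_edge bd g (i + 1) \<inter> {a, b} \<noteq> {}"
    using fe1 n2 ab by auto
  moreover have "face_edge bd g (i + 5) \<noteq> {a, b}" "face_edge bd g (i + 5) \<inter> {a, b} \<noteq> {}"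
    using fe5 n5 ab by auto
  ultimately have c1: "face_edge bd g (i + 1) \<in> cyc_edges C" and c5: "face_edge bd g (i + 5) \<in> cyc_edges C"
    using geoR by blast+
  have "white_face C bd (other_face Fs bd g (face_edge bd g i))" using fe ofg wf by simp
  then show ?thesis unfolding transfer_def using L6 bl c1 c5 fe abC by simp
qed


lemma sum_count:
  assumes "finite A"
  shows "(\<Sum>g\<in>A. if P g then c else (0::real)) = c * real (card {g \<in> A. P g})"
proof -
  have "(\<Sum>g\<in>A. if P g then c else 0) = (\<Sum>g\<in>{g \<in> A. P g}. c)"
    using sum.inter_filter[OF assms, of "\<lambda>_. c" P] by simp
  then show ?thesis by simp
qed

theorem lemma5:
  fixes V :: "'a set" and E :: "'a set set" and Fs :: "'f set" and bd :: "'f \<Rightarrow> 'a list"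
    and C :: "'a list" and f :: 'f and v1 v2 v3 v4 v5 v6 :: 'a
  assumes "fullerene V E Fs bd"
    and "longest_cycle E C"
    and "f \<in> Fs"
    and "white_face C bd f"
    and "cyclic_order (bd f) [v1, v2, v3, v4, v5, v6]"
    and "{v3, v4} \<in> cyc_edges C"
    and "{v5, v6} \<in> cyc_edges C"
    and "{v4, v5} \<notin> cyc_edges C"
  shows "final_charge Fs bd C f = 1"
proof -
  note full = assms(1) and lc = assms(2) and fF = assms(3) and wf = assms(4)
  note e34 = assms(6) and e56 = assms(7) and n45 = assms(8)
  obtain n where rot: "[v1, v2, v3, v4, v5, v6] = rotate n (bd f) \<or> [v1, v2, v3, v4, v5, v6] = rotate n (rev (bd f))"
    using assms(5) unfolding cyclic_order_def by blast
  have cf: "is_cycle E (bd f)" using full_cycle[OF full fF] by blast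
  have df: "distinct (bd f)" and fEs: "cyc_edges (bd f) \<subseteq> E" using cf unfolding is_cycle_def by auto
  have cE6: "cyc_edges [v1, v2, v3, v4, v5, v6] = cyc_edges (bd f)"
    using rot cyc_edges_rotate cyc_edges_rev by metis
  have set6: "set (bd f) = {v1, v2, v3, v4, v5, v6}"
    using rot by (metis list.set(1) list.set(2) set_rev set_rotate)
  have dist6: "distinct [v1, v2, v3, v4, v5, v6]"
    using rot df by (metis distinct_rev distinct_rotate)
  have el: "cyc_edges [v1, v2, v3, v4, v5, v6] = {{v6, v1}, {v1, v2}, {v2, v3}, {v3, v4}, {v4, v5}, {v5, v6}}"
    by (simp add: cyc_edges_pedges)
  have cfe: "cyc_edges (bd f) = {{v6, v1}, {v1, v2}, {v2, v3}, {v3, v4}, {v4, v5}, {v5, v6}}"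
    using cE6 el by simp
  have fE: "{v1,v2} \<in> E" "{v2,v3} \<in> E" "{v3,v4} \<in> E" "{v4,v5} \<in> E" "{v5,v6} \<in> E" "{v6,v1} \<in> E"
    using fEs cfe by auto
  have inC: "v3 \<in> set C" "v4 \<in> set C" "v5 \<in> set C" "v6 \<in> set C"
    using cyc_edges_subset[OF e34] cyc_edges_subset[OF e56] by auto
  have Wsub: "white_verts C (bd f) \<subseteq> {v1, v2}" unfolding white_verts_def using set6 inC by auto
  have "card (white_verts C (bd f)) = 2" using wf unfolding white_face_def .
  moreover have "card {v1, v2} = 2" using dist6 by simp
  ultimately have "white_verts C (bd f) = {v1, v2}" using Wsub by (simp add: card_subset_eq)
  then have w: "v1 \<notin> set C" "v2 \<notin> set C" unfolding white_verts_def by auto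
  have nbf: "\<not> black_face C bd f" using \<open>white_verts C (bd f) = {v1, v2}\<close> unfolding black_face_def by simp
  have rec0: "(\<Sum>i<length (bd f). transfer Fs bd C f i) = 0"
    unfolding transfer_def using nbf by simp
  have init: "initial_charge C bd f = 2" using wf unfolding initial_charge_def white_face_def by simp
  have geo1: "\<And>g. g \<in> Fs \<Longrightarrow> g \<noteq> f \<Longrightarrow> {v3, v4} \<in> cyc_edges (bd g) \<Longrightarrow>
      length (bd g) = 6 \<and> set (bd g) \<subseteq> set C \<and>
      (\<forall>e\<in>cyc_edges (bd g). e \<noteq> {v3, v4} \<and> e \<inter> {v3, v4} \<noteq> {} \<longrightarrow> e \<in> cyc_edges C)"
  proof -
    fix g assume g: "g \<in> Fs" "g \<noteq> f" "{v3, v4} \<in> cyc_edges (bd g)"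
    show "length (bd g) = 6 \<and> set (bd g) \<subseteq> set C \<and>
      (\<forall>e\<in>cyc_edges (bd g). e \<noteq> {v3, v4} \<and> e \<inter> {v3, v4} \<noteq> {} \<longrightarrow> e \<in> cyc_edges C)"
      by (rule geo[OF full lc fF g(1,2) dist6 _ _ _ fE w e34 e56 n45 g(3)]) (use cfe in auto)
  qed
  have geo2: "\<And>g. g \<in> Fs \<Longrightarrow> g \<noteq> f \<Longrightarrow> {v6, v5} \<in> cyc_edges (bd g) \<Longrightarrow>
      length (bd g) = 6 \<and> set (bd g) \<subseteq> set C \<and>
      (\<forall>e\<in>cyc_edges (bd g). e \<noteq> {v6, v5} \<and> e \<inter> {v6, v5} \<noteq> {} \<longrightarrow> e \<in> cyc_edges C)"
  proof -
    fix g assume g: "g \<in> Fs" "g \<noteq> f" "{v6, v5} \<in> cyc_edges (bd g)"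
    have d: "distinct [v2, v1, v6, v5, v4, v3]" using dist6 by auto
    have fE': "{v2,v1} \<in> E" "{v1,v6} \<in> E" "{v6,v5} \<in> E" "{v5,v4} \<in> E" "{v4,v3} \<in> E" "{v3,v2} \<in> E"
      using fE by (simp_all add: insert_commute)
    have e': "{v6, v5} \<in> cyc_edges C" "{v4, v3} \<in> cyc_edges C" "{v5, v4} \<notin> cyc_edges C"
      using e34 e56 n45 by (simp_all add: insert_commute)
    show "length (bd g) = 6 \<and> set (bd g) \<subseteq> set C \<and>
      (\<forall>e\<in>cyc_edges (bd g). e \<noteq> {v6, v5} \<and> e \<inter> {v6, v5} \<noteq> {} \<longrightarrow> e \<in> cyc_edges C)"
      by (rule geo[OF full lc fF g(1,2) d _ _ _ fE' w(2,1) e' g(3)]) (use cfe in \<open>auto simp: insert_commute\<close>)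
  qed
  have e56': "{v5, v6} = {v6, v5}" by (simp add: insert_commute)
  have fC: "\<And>e. e \<in> cyc_edges (bd f) \<Longrightarrow> e \<in> cyc_edges C \<Longrightarrow> e = {v3, v4} \<or> e = {v5, v6}"
  proof -
    fix e assume e: "e \<in> cyc_edges (bd f)" "e \<in> cyc_edges C"
    have "e \<subseteq> set C" using cyc_edges_subset[OF e(2)] .
    then have "v1 \<notin> e" "v2 \<notin> e" using w by auto
    then show "e = {v3, v4} \<or> e = {v5, v6}" using e cfe n45 by auto
  qed
  have ne12: "{v3, v4} \<noteq> {v5, v6}" using dist6 by (auto simp: doubleton_eq_iff)
  have tm: "\<And>g i. g \<in> Fs \<Longrightarrow> i < length (bd g) \<Longrightarrow>
     (if other_face Fs bd g (face_edge bd g i) = f then transfer Fs bd C g i else 0)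
     = (if face_edge bd g i = {v3, v4} then (if g \<noteq> f then 1/2 else 0) else 0)
     + (if face_edge bd g i = {v5, v6} then (if g \<noteq> f then 1/2 else 0) else (0::real))"
  proof -
    fix g i assume g: "g \<in> Fs" and i: "i < length (bd g)"
    let ?e = "face_edge bd g i"
    have lg: "0 < length (bd g)" using i by linarith
    have eg: "?e \<in> cyc_edges (bd g)" using fe_in[of bd g i] lg by blast
    show "(if other_face Fs bd g ?e = f then transfer Fs bd C g i else 0)
     = (if ?e = {v3, v4} then (if g \<noteq> f then 1/2 else 0) else 0)
     + (if ?e = {v5, v6} then (if g \<noteq> f then 1/2 else 0) else (0::real))"
    proof (cases "g \<noteq> f \<and> ?e = {v3, v4}")
      case True
      have ef: "?e \<in> cyc_edges (bd f)" using True cfe by simp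
      have of: "other_face Fs bd g {v3, v4} = f"
        using other_face_eq[OF full g fF True[THEN conjunct1, symmetric] eg ef] True by simp
      have "transfer Fs bd C g i = 1/2"
        using transfer_half[OF full g geo1[OF g True[THEN conjunct1]] _ e34 of wf] True eg by simp
      then show ?thesis using True of ne12 by simp
    next
      case F1: False
      show ?thesis
      proof (cases "g \<noteq> f \<and> ?e = {v5, v6}")
        case True
        have ef: "?e \<in> cyc_edges (bd f)" using True cfe by simp
        have of: "other_face Fs bd g {v6, v5} = f"
          using other_face_eq[OF full g fF True[THEN conjunct1, symmetric] eg ef] True e56' by simp
        have ge: "{v6, v5} \<in> cyc_edges (bd g)" using True eg e56' by simp
        have e65: "{v6, v5} \<in> cyc_edges C" using e56 e56' by simp
        have "transfer Fs bd C g i = 1/2"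
          using transfer_half[OF full g geo2[OF g True[THEN conjunct1] ge] _ e65 of wf] True e56' by simp
        then show ?thesis using True of ne12 e56' by simp
      next
        case F2: False
        have "(if other_face Fs bd g ?e = f then transfer Fs bd C g i else 0) = 0"
        proof (cases "other_face Fs bd g ?e = f")
          case True
          then have "f \<noteq> g" "?e \<in> cyc_edges (bd f)" using of_f[OF full g eg] by auto
          then have "?e \<notin> cyc_edges C" using fC F1 F2 by auto
          then have "transfer Fs bd C g i = 0" unfolding transfer_def by simp
          then show ?thesis by simp
        qed simp
        moreover have "(if ?e = {v3, v4} then (if g \<noteq> f then 1/2 else 0) else 0)
          + (if ?e = {v5, v6} then (if g \<noteq> f then 1/2 else 0) else (0::real)) = 0"
          using F1 F2 by auto
        ultimately show ?thesis by simp
      qed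
    qed
  qed
  have fin: "finite Fs" using full_finite[OF full] .
  have sumS: "(\<Sum>g\<in>Fs. \<Sum>i<length (bd g).
          if other_face Fs bd g (face_edge bd g i) = f then transfer Fs bd C g i else 0)
     = (\<Sum>g\<in>Fs. (if {v3, v4} \<in> cyc_edges (bd g) \<and> g \<noteq> f then 1/2 else 0)
              + (if {v5, v6} \<in> cyc_edges (bd g) \<and> g \<noteq> f then 1/2 else (0::real)))"
  proof (rule sum.cong[OF refl])
    fix g assume g: "g \<in> Fs"
    have dg: "distinct (bd g)" "length (bd g) \<ge> 3"
      using full_cycle[OF full g] unfolding is_cycle_def by auto
    have "(\<Sum>i<length (bd g). if other_face Fs bd g (face_edge bd g i) = f then transfer Fs bd C g i else 0)
      = (\<Sum>i<length (bd g). (if face_edge bd g i = {v3, v4} then (if g \<noteq> f then 1/2 else 0) else 0)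
     + (if face_edge bd g i = {v5, v6} then (if g \<noteq> f then 1/2 else 0) else (0::real)))"
      using tm[OF g] by (intro sum.cong) auto
    also have "\<dots> = (\<Sum>i<length (bd g). (if face_edge bd g i = {v3, v4} then (if g \<noteq> f then 1/2 else 0) else 0))
     + (\<Sum>i<length (bd g). (if face_edge bd g i = {v5, v6} then (if g \<noteq> f then 1/2 else 0) else (0::real)))"
      by (rule sum.distrib)
    also have "\<dots> = (if {v3, v4} \<in> cyc_edges (bd g) then (if g \<noteq> f then 1/2 else 0) else 0)
     + (if {v5, v6} \<in> cyc_edges (bd g) then (if g \<noteq> f then 1/2 else 0) else (0::real))"
      using count_edge[of bd g] dg by simp
    finally show "(\<Sum>i<length (bd g). if other_face Fs bd g (face_edge bd g i) = f then transfer Fs bd C g i else 0)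
     = (if {v3, v4} \<in> cyc_edges (bd g) \<and> g \<noteq> f then 1/2 else 0)
              + (if {v5, v6} \<in> cyc_edges (bd g) \<and> g \<noteq> f then 1/2 else (0::real))" by simp
  qed
  have card1: "\<And>e. e \<in> cyc_edges (bd f) \<Longrightarrow> card {g \<in> Fs. e \<in> cyc_edges (bd g) \<and> g \<noteq> f} = 1"
  proof -
    fix e assume e: "e \<in> cyc_edges (bd f)"
    have eE: "e \<in> E" using edge_of_face[OF full fF e] .
    have "{g \<in> Fs. e \<in> cyc_edges (bd g) \<and> g \<noteq> f} = {g \<in> Fs. e \<in> cyc_edges (bd g)} - {f}" by auto
    moreover have "f \<in> {g \<in> Fs. e \<in> cyc_edges (bd g)}" using fF e by simp
    ultimately show "card {g \<in> Fs. e \<in> cyc_edges (bd g) \<and> g \<noteq> f} = 1"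
      using full_card[OF full eE] by (simp add: card_Diff_singleton)
  qed
  have "(\<Sum>g\<in>Fs. (if {v3, v4} \<in> cyc_edges (bd g) \<and> g \<noteq> f then 1/2 else 0)
              + (if {v5, v6} \<in> cyc_edges (bd g) \<and> g \<noteq> f then 1/2 else (0::real)))
     = (\<Sum>g\<in>Fs. (if {v3, v4} \<in> cyc_edges (bd g) \<and> g \<noteq> f then 1/2 else 0))
       + (\<Sum>g\<in>Fs. (if {v5, v6} \<in> cyc_edges (bd g) \<and> g \<noteq> f then 1/2 else (0::real)))"
    by (rule sum.distrib)
  also have "\<dots> = 1/2 * real (card {g \<in> Fs. {v3, v4} \<in> cyc_edges (bd g) \<and> g \<noteq> f})
      + 1/2 * real (card {g \<in> Fs. {v5, v6} \<in> cyc_edges (bd g) \<and> g \<noteq> f})"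
    using sum_count[OF fin] by simp
  also have "\<dots> = 1" using card1 cfe by simp
  finally have S1: "(\<Sum>g\<in>Fs. \<Sum>i<length (bd g).
          if other_face Fs bd g (face_edge bd g i) = f then transfer Fs bd C g i else 0) = 1"
    using sumS by simp
  show ?thesis unfolding final_charge_def using init rec0 S1 by simp
qed

end
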